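(* Let $0<q<1$, $\tau\in\mathbb{R}$ and $\phi\in[0,2\pi)$. Let $\{e_n\}_{n\in\mathbb{Z}_+}$ be the standard orthonormal basis of $\ell^2(\mathbb{Z}_+)$ and let $D$ be the bounded self-adjoint operator on $\ell^2(\mathbb{Z}_+)$ with $De_n=q^{2n}e_n$. For $\lambda\in\{-q^{2k}\mid k\in\mathbb{Z}_+\}\cup\{q^{2\tau+2k}\mid k\in\mathbb{Z}_+\}$ let $$v_\lambda^\phi=\sum_{n=0}^\infty i^n e^{in\phi}p_n(\lambda)e_n,\qquad p_n(\lambda)=\frac{q^{-n\tau}q^{\frac12 n(n-1)}}{\sqrt{(q^2;q^2)_n}}\;{}_2\varphi_1\!\left(q^{-2n},\,q^{2\tau}/\lambda;\,0;\,q^2,\,-q^2\lambda\right).$$ Then for all $k,l\in\mathbb{Z}_+$ with $k\geq l$, $$\langle Dv^\phi_{-q^{2k}},v^\phi_{-q^{2l}}\rangle=(-q^{2\tau+2};q^2)_\infty\,(q^2;q^2)_k\,(-q^{2-2\tau};q^2)_l,$$ $$\langle Dv^\phi_{q^{2\tau+2k}},v^\phi_{q^{2\tau+2l}}\rangle=(-q^{2-2\tau};q^2)_\infty\,(q^2;q^2)_k\,(-q^{2+2\tau};q^2)_l,$$ and for all $k,l\in\mathbb{Z}_+$, $$\langle Dv^\phi_{-q^{2k}},v^\phi_{q^{2\tau+2l}}\rangle=(q^2;q^2)_\infty\,(-q^{2-2\tau};q^2)_k\,(-q^{2+2\tau};q^2)_l.$$ (The remaining matrix coefficients follow from self-adjointness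 of $D$.)
   Context: For $k\in\mathbb{Z}_+\cup\{\infty\}$ the $q$-shifted factorial is $(a;q)_k=\prod_{i=0}^{k-1}(1-aq^i)$, and $(a_1,\dots,a_r;q)_k=\prod_{i}(a_i;q)_k$. The basic hypergeometric series is ${}_2\varphi_1(a,b;c;p,z)=\sum_{j\ge0}\frac{(a;p)_j(b;p)_j}{(p;p)_j(c;p)_j}z^j$ (here terminating since $a=q^{-2n}$, $p=q^2$). The vectors $v_\lambda^\phi$ lie in $\ell^2(\mathbb{Z}_+)$ (they are the eigenvectors forming an orthogonal basis). $\langle\cdot,\cdot\rangle$ is the inner product of $\ell^2(\mathbb{Z}_+)$. *)

theory Defs
  imports "HOL-Analysis.Analysis"
begin

definition qpoch :: "real \<Rightarrow> real \<Rightarrow> nat \<Rightarrow> real" where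
  "qpoch a q k = (\<Prod>i<k. 1 - a * q ^ i)"

definition qpoch_inf :: "real \<Rightarrow> real \<Rightarrow> real" where
  "qpoch_inf a q = (\<Prod>i. 1 - a * q ^ i)"

definition phi21 :: "real \<Rightarrow> real \<Rightarrow> real \<Rightarrow> real \<Rightarrow> real \<Rightarrow> real" where
  "phi21 a b c p z =
     (\<Sum>j. qpoch a p j * qpoch b p j / (qpoch p p j * qpoch c p j) * z ^ j)"

definition pn :: "real \<Rightarrow> real \<Rightarrow> real \<Rightarrow> nat \<Rightarrow> real" where
  "pn q \<tau> lam n =
     q powr (- (real n * \<tau>)) * q powr (real n * (real n - 1) / 2)
     / sqrt (qpoch (q^2) (q^2) n)
     * phi21 (q powr (- (2 * real n))) (q powr (2 * \<tau>) / lam) 0 (q^2) (- (q^2) * lam)"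

definition vvec :: "real \<Rightarrow> real \<Rightarrow> real \<Rightarrow> real \<Rightarrow> nat \<Rightarrow> complex" where
  "vvec q \<tau> \<phi> lam n = \<i> ^ n * exp (\<i> * of_real (real n * \<phi>)) * of_real (pn q \<tau> lam n)"

definition D_inner :: "real \<Rightarrow> (nat \<Rightarrow> complex) \<Rightarrow> (nat \<Rightarrow> complex) \<Rightarrow> complex" where
  "D_inner q v w = (\<Sum>n. of_real (q ^ (2 * n)) * v n * cnj (w n))"

end

theory Submission
  imports Defs
begin


lemma qpoch_0[simp]: "qpoch a p 0 = 1" by (simp add: qpoch_def)
lemma qpoch_Suc: "qpoch a p (Suc n) = qpoch a p n * (1 - a * p^n)"
  by (simp add: qpoch_def)
lemma qpoch_Suc': "qpoch a p (Suc n) = (1 - a) * qpoch (a*p) p n"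
  unfolding qpoch_def by (subst prod.lessThan_Suc_shift) (simp add: mult.assoc)
lemma qpoch_zero_a[simp]: "qpoch 0 p n = 1" by (simp add: qpoch_def)
lemma qpoch_pp_pos: "0 < p \<Longrightarrow> p < 1 \<Longrightarrow> qpoch p p n > 0"
  unfolding qpoch_def
proof (rule prod_pos)
  fix i assume "0<p" "p<1"
  then have "p^Suc i < 1" by (rule power_Suc_less_one)
  then show "0 < 1 - p * p^i" unfolding power_Suc by linarith
qed
lemma qpoch_vanish: "p \<noteq> 0 \<Longrightarrow> n < j \<Longrightarrow> qpoch (inverse (p^n)) p j = 0"
  unfolding qpoch_def by (rule prod_zero) (auto intro!: bexI[of _ n])

lemma alg_B: 
  fixes D K r w y :: real
  assumes "K \<noteq> 0" "r \<noteq> 0" "w \<noteq> 0" "y \<noteq> 0" "1 - K*w \<noteq> 0" "1 - K*(K*w) \<noteq> 0"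
  shows "r * (D * ((1 - K*y)/(r*y)/(1 - K*w))) + r * (K*(K*w)) * (D * ((1 - inverse y * w) * (-K/r) / (1 - K*w)) * ((1 - K*y)/(r*y)/(1 - K*(K*w))))
    = D / w + D * ((1 - inverse y * w) * (-K/r) / (1 - K*w)) / (K*w) * (K*(K*w) + r)
      + r * (D * ((1 - inverse y * w) * (-K/r) / (1 - K*w)) * ((1 - inverse y * (K*w)) * (-K/r) / (1 - K*(K*w))))"
  using assms
  apply (simp add: divide_simps inverse_eq_divide)
  apply (simp add: algebra_simps)
  done

lemma alg_MR:
  fixes K x y r Sx S' T SQ :: real
  assumes "r \<noteq> 0" "y \<noteq> 0" "SQ = Sx - K*x*T" "r*y*T = (y-1)*(y+r)*S' + r*Sx"
  shows "SQ = (1 - K*x/y)*Sx - K*x*(y-1)*(y+r)/(r*y)*S'"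
proof -
  have Te: "T = ((y-1)*(y+r)*S' + r*Sx)/(r*y)" using assms(1,2,4) by (simp add: eq_divide_eq mult_ac)
  show ?thesis unfolding assms(3) Te using assms(1,2) by (simp add: field_simps)
qed

lemma alg_BB:
  fixes K r uu vv Xv cc aa bb :: real
  assumes "K \<noteq> 0" "r \<noteq> 0" "vv \<noteq> 0" "Xv = cc*aa*bb*(1 - (-(K/r))* vv) \<or> uu = vv"
  shows "(1 - K*uu/(K* vv))*Xv - K*uu*(K* vv - 1)*(K* vv + r)/(r*(K* vv))*(cc*aa*bb) = cc*(aa*(1 - K*uu))*(bb*(1 - (-(K/r))* vv))"
  using assms(4)
proof
  assume Xv: "Xv = cc*aa*bb*(1 - (-(K/r))* vv)"
  show ?thesis unfolding Xv using assms(1-3) by (simp add: field_simps)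
next
  assume "uu = vv"
  then show ?thesis using assms(1-3) by (simp add: field_simps)
qed
lemma alg_AA:
  fixes K r uu vv Xv cc aa bb :: real
  assumes "K \<noteq> 0" "r \<noteq> 0" "vv \<noteq> 0" "Xv = cc*aa*bb*(1 - (-(K*r))* vv) \<or> uu = vv"
  shows "(1 - K*(-r*uu)/(-r*(K* vv)))*Xv - K*(-r*uu)*(-r*(K* vv) - 1)*(-r*(K* vv) + r)/(r*(-r*(K* vv)))*(cc*aa*bb) = cc*(aa*(1 - K*uu))*(bb*(1 - (-(K*r))* vv))"
  using assms(4)
proof
  assume Xv: "Xv = cc*aa*bb*(1 - (-(K*r))* vv)"
  show ?thesis unfolding Xv using assms(1-3) by (simp add: field_simps)
next
  assume "uu = vv"
  then show ?thesis using assms(1-3) by (simp add: field_simps)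
qed
lemma alg_AB:
  fixes K r uu vv cc aa bb :: real
  assumes "K \<noteq> 0" "r \<noteq> 0" "vv \<noteq> 0"
  shows "(1 - K*(-r*uu)/(K* vv))*(cc*aa*bb*(1 - (-(K/r))* vv)) - K*(-r*uu)*(K* vv - 1)*(K* vv + r)/(r*(K* vv))*(cc*aa*bb) = cc*(aa*(1 - (-(K*r))*uu))*(bb*(1 - (-(K/r))* vv))"
  using assms by (simp add: field_simps)

locale qs =
  fixes Q r :: real
  assumes Q0: "0 < Q" and Q1: "Q < 1" and r0: "0 < r"
begin
lemma Qpow_pos: "0 < Q^n" using Q0 by simp
lemma Qpow_lt1: "0 < n \<Longrightarrow> Q^n < 1" using Q0 Q1 by (simp add: power_less_one_iff)
lemma QQ_pos: "0 < qpoch Q Q n" using qpoch_pp_pos[OF Q0 Q1] .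

definition piq :: "nat \<Rightarrow> real \<Rightarrow> real" where "piq j x = (\<Prod>i<j. x - Q^i)"
definition dq :: "nat \<Rightarrow> nat \<Rightarrow> real" where
  "dq n j = qpoch (inverse (Q^n)) Q j / qpoch Q Q j * (-Q/r)^j"
definition uq :: "nat \<Rightarrow> real \<Rightarrow> real" where "uq n x = (\<Sum>j\<le>n. dq n j * piq j x)"

lemma piq_0[simp]: "piq 0 x = 1" by (simp add: piq_def)
lemma piq_Suc: "piq (Suc j) x = piq j x * (x - Q^j)" by (simp add: piq_def)
lemma piq_Q: "piq (Suc j) (Q*x) = (Q*x - 1) * Q^j * piq j x"
proof -
  have "piq (Suc j) (Q*x) = (Q*x - 1) * (\<Prod>i<j. Q * (x - Q^i))"
    unfolding piq_def by (subst prod.lessThan_Suc_shift) (simp add: algebra_simps)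
  also have "\<dots> = (Q*x - 1) * Q^j * piq j x" by (simp add: piq_def prod.distrib)
  finally show ?thesis .
qed
lemma piq_diff: "piq (Suc j) x - piq (Suc j) (Q*x) = (1 - Q^Suc j) * x * piq j x"
  unfolding piq_Q by (simp add: piq_Suc algebra_simps)
lemma piq_divQ: "(x - 1) * piq j (x/Q) = piq (Suc j) x / Q^j"
proof -
  have e: "Q*(x/Q) = x" using Q0 by simp
  have "piq (Suc j) x = (x - 1) * Q^j * piq j (x/Q)" using piq_Q[of j "x/Q"] unfolding e .
  then have "piq (Suc j) x / Q^j = ((x - 1) * piq j (x/Q)) * Q^j / Q^j" by (simp only: mult_ac)
  also have "\<dots> = (x - 1) * piq j (x/Q)"
  proof -
    have nz: "Q^j \<noteq> 0" using Qpow_pos[of j] by linarith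
    show ?thesis by (rule nonzero_mult_div_cancel_right[OF nz])
  qed
  finally show ?thesis by (rule sym)
qed

lemma dq_vanish: "n < j \<Longrightarrow> dq n j = 0"
  using qpoch_vanish[of Q n j] Q0 by (simp add: dq_def)
lemma uq_ext: "n < N \<Longrightarrow> uq n x = (\<Sum>j<N. dq n j * piq j x)"
proof -
  assume "n<N"
  have "(\<Sum>j<N. dq n j * piq j x) = (\<Sum>j\<le>n. dq n j * piq j x)"
    by (rule sum.mono_neutral_right) (use \<open>n<N\<close> dq_vanish in auto)
  then show ?thesis by (simp add: uq_def)
qed
lemma uq_0[simp]: "uq 0 x = 1" by (simp add: uq_def dq_def)

lemma dq_0[simp]: "dq n 0 = 1" by (simp add: dq_def)
lemma dq_SS: "dq (Suc n) (Suc i) * (1 - Q^Suc i) = (1 - Q^Suc n) / (r * Q^n) * dq n i"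
proof -
  have a: "qpoch (inverse (Q^Suc n)) Q (Suc i) = (1 - inverse (Q^Suc n)) * qpoch (inverse (Q^n)) Q i"
    using Q0 by (simp add: qpoch_Suc' field_simps)
  have b: "qpoch Q Q (Suc i) = qpoch Q Q i * (1 - Q^Suc i)" by (simp add: qpoch_Suc)
  have e: "(1 - inverse (Q^Suc n)) * (-Q/r) = (1 - Q^Suc n) / (r * Q^n)"
    using Q0 r0 by (simp add: field_simps)
  have gen: "\<And>c P R z t T::real. z \<noteq> 0 \<Longrightarrow> (c*P)/(R*z) * (t*T) * z = (c*t) * (P/R*T)"
    by (simp add: field_simps)
  have nz: "1 - Q^Suc i \<noteq> 0" using Qpow_lt1[of "Suc i"] by simp
  have "dq (Suc n) (Suc i) * (1 - Q^Suc i) = ((1 - inverse (Q^Suc n)) * qpoch (inverse (Q^n)) Q i) / (qpoch Q Q i * (1 - Q^Suc i)) * ((-Q/r) * (-Q/r)^i) * (1 - Q^Suc i)"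
    unfolding dq_def a b by (simp only: power_Suc)
  also have "\<dots> = ((1 - inverse (Q^Suc n)) * (-Q/r)) * (qpoch (inverse (Q^n)) Q i / qpoch Q Q i * (-Q/r)^i)"
    by (rule gen[OF nz])
  also have "\<dots> = (1 - Q^Suc n) / (r * Q^n) * dq n i" by (simp only: e dq_def)
  finally show ?thesis .
qed

lemma F_id: "uq (Suc n) x - uq (Suc n) (Q*x) = (1 - Q^Suc n) / (r * Q^n) * x * uq n x"
proof -
  have "uq (Suc n) x - uq (Suc n) (Q*x) = (\<Sum>j<Suc (Suc n). dq (Suc n) j * (piq j x - piq j (Q*x)))"
    by (simp add: uq_ext[of "Suc n" "Suc (Suc n)"] sum_subtractf algebra_simps)
  also have "\<dots> = (\<Sum>i<Suc n. dq (Suc n) (Suc i) * (piq (Suc i) x - piq (Suc i) (Q*x)))"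
    by (subst sum.lessThan_Suc_shift) simp
  also have "\<dots> = (\<Sum>i<Suc n. (1 - Q^Suc n) / (r * Q^n) * x * (dq n i * piq i x))"
  proof (rule sum.cong[OF refl])
    fix i
    have "dq (Suc n) (Suc i) * (piq (Suc i) x - piq (Suc i) (Q*x)) = (dq (Suc n) (Suc i) * (1 - Q^Suc i)) * x * piq i x"
      unfolding piq_diff by (simp only: mult_ac)
    also have "\<dots> = (1 - Q^Suc n) / (r * Q^n) * x * (dq n i * piq i x)"
      unfolding dq_SS by (simp only: mult_ac)
    finally show "dq (Suc n) (Suc i) * (piq (Suc i) x - piq (Suc i) (Q*x)) = (1 - Q^Suc n) / (r * Q^n) * x * (dq n i * piq i x)" .
  qed
  also have "\<dots> = (1 - Q^Suc n) / (r * Q^n) * x * uq n x"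
    by (simp only: uq_ext[OF lessI, of n x] sum_distrib_left)
  finally show ?thesis .
qed


lemma dq_Suc_j: "dq m (Suc j) = dq m j * ((1 - inverse (Q^m) * Q^j) * (-Q/r) / (1 - Q * Q^j))"
proof -
  have gen: "\<And>P c R z t T::real. z \<noteq> 0 \<Longrightarrow> P*c/(R*z)*(t*T) = P/R*T*(c*t/z)"
    by (simp add: field_simps)
  have nz: "1 - Q * Q^j \<noteq> 0" using Qpow_lt1[of "Suc j"] by simp
  show ?thesis unfolding dq_def qpoch_Suc power_Suc by (rule gen[OF nz])
qed

lemma dq_Suc_Suc: "dq (Suc m) (Suc j) = dq m j * ((1 - Q * Q^m) / (r * Q^m) / (1 - Q * Q^j))"
proof -
  have nz: "1 - Q * Q^j \<noteq> 0" using Qpow_lt1[of "Suc j"] by simp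
  have "dq (Suc m) (Suc j) = dq (Suc m) (Suc j) * (1 - Q^Suc j) / (1 - Q^Suc j)"
    using nz by simp
  also have "\<dots> = dq m j * ((1 - Q * Q^m) / (r * Q^m) / (1 - Q * Q^j))"
    unfolding dq_SS by (simp add: field_simps)
  finally show ?thesis .
qed

lemma sum_shift1: "(\<Sum>s<Suc n. (if s = 0 then 0 else f (s - 1))) = (\<Sum>j<n. f j)"
  by (subst sum.lessThan_Suc_shift) simp

lemma sum_shift2: "(\<Sum>s<Suc (Suc n). (if s < 2 then 0 else f (s - 2))) = (\<Sum>j<n. (f j :: real))"
  by (subst sum.lessThan_Suc_shift, subst sum.lessThan_Suc_shift) (simp add: numeral_2_eq_2)


definition cL :: "nat \<Rightarrow> nat \<Rightarrow> real" where
  "cL m s = r * (if s = 0 then 0 else dq (Suc m) (s - 1)) + r * Q^s * dq (Suc m) s"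
definition cR :: "nat \<Rightarrow> nat \<Rightarrow> real" where
  "cR m s = (if s < 2 then 0 else dq m (s - 2) / Q^(s - 2))
          + (if s = 0 then 0 else dq m (s - 1) / Q^(s - 1) * (Q^s + r)) + r * dq m s"

lemma cL_cR: "cL m s = cR m s"
proof (cases s)
  case 0 then show ?thesis by (simp add: cL_def cR_def)
next
  case (Suc s') note s = this
  show ?thesis
  proof (cases s')
    case 0
    have "1 - Q \<noteq> 0" using Q1 by simp
    then show ?thesis using s 0 Q0 r0
      unfolding cL_def cR_def by (simp add: dq_Suc_Suc[of m 0, simplified] dq_Suc_j[of m 0, simplified] field_simps)
  next
    case (Suc j)
    have w: "Q^j \<noteq> 0" using Qpow_pos[of j] by linarith
    have y: "Q^m \<noteq> 0" using Qpow_pos[of m] by linarith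
    have n1: "1 - Q * Q^j \<noteq> 0" using Qpow_lt1[of "Suc j"] by simp
    have n2: "1 - Q * (Q * Q^j) \<noteq> 0" using Qpow_lt1[of "Suc (Suc j)"] by simp
    have "cL m s = r * dq (Suc m) (Suc j) + r * (Q*(Q*Q^j)) * dq (Suc m) (Suc (Suc j))"
      unfolding cL_def s Suc by simp
    also have "\<dots> = r * (dq m j * ((1 - Q * Q^m) / (r * Q^m) / (1 - Q * Q^j))) + r * (Q*(Q*Q^j)) * (dq m j * ((1 - inverse (Q^m) * Q^j) * (-Q/r) / (1 - Q * Q^j)) * ((1 - Q * Q^m) / (r * Q^m) / (1 - Q * (Q * Q^j))))"
      by (simp only: dq_Suc_Suc[of m "Suc j"] dq_Suc_Suc[of m j] dq_Suc_j[of m j] power_Suc)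
    also have "\<dots> = dq m j / Q^j + dq m j * ((1 - inverse (Q^m) * Q^j) * (-Q/r) / (1 - Q * Q^j)) / (Q*Q^j) * (Q*(Q*Q^j) + r)
      + r * (dq m j * ((1 - inverse (Q^m) * Q^j) * (-Q/r) / (1 - Q * Q^j)) * ((1 - inverse (Q^m) * (Q*Q^j)) * (-Q/r) / (1 - Q * (Q * Q^j))))"
      by (rule alg_B[OF _ _ w y n1 n2]) (use Q0 r0 in auto)
    also have "\<dots> = dq m j / Q^j + dq m (Suc j) / (Q*Q^j) * (Q*(Q*Q^j)+r) + r * dq m (Suc (Suc j))"
      by (simp only: dq_Suc_j[of m "Suc j"] dq_Suc_j[of m j] power_Suc)
    also have "\<dots> = cR m s"
      unfolding cR_def s Suc by simp
    finally show ?thesis .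
  qed
qed

lemma B_id: "x * r * uq (Suc m) x = (x - 1) * (x + r) * uq m (x/Q) + r * uq m x"
proof -
  have L: "x * r * uq (Suc m) x = (\<Sum>s<Suc (Suc (Suc m)). cL m s * piq s x)"
  proof -
    have "x * r * uq (Suc m) x = (\<Sum>j<Suc (Suc m). r * dq (Suc m) j * (x * piq j x))"
      by (simp only: uq_ext[OF lessI, of "Suc m" x] sum_distrib_left) (rule sum.cong, simp_all add: mult_ac)
    also have "\<dots> = (\<Sum>j<Suc (Suc m). r * dq (Suc m) j * piq (Suc j) x) + (\<Sum>j<Suc (Suc m). r * Q^j * dq (Suc m) j * piq j x)"
      by (simp add: piq_Suc sum.distrib[symmetric] algebra_simps)
    also have "(\<Sum>j<Suc (Suc m). r * dq (Suc m) j * piq (Suc j) x) = (\<Sum>s<Suc (Suc (Suc m)). (if s = 0 then 0 else r * dq (Suc m) (s - 1) * piq s x))"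
      by (rule sym, subst sum.lessThan_Suc_shift, simp)
    also have "(\<Sum>j<Suc (Suc m). r * Q^j * dq (Suc m) j * piq j x) = (\<Sum>s<Suc (Suc (Suc m)). r * Q^s * dq (Suc m) s * piq s x)"
      by (simp add: dq_vanish)
    finally show ?thesis
      by (simp only: sum.distrib[symmetric]) (rule sum.cong[OF refl], simp add: cL_def algebra_simps)
  qed
  have R: "(x - 1) * (x + r) * uq m (x/Q) + r * uq m x = (\<Sum>s<Suc (Suc (Suc m)). cR m s * piq s x)"
  proof -
    have "(x - 1) * (x + r) * uq m (x/Q) = (\<Sum>j<Suc m. dq m j / Q^j * ((x + r) * piq (Suc j) x))"
    proof (simp only: uq_ext[OF lessI, of m "x/Q"] sum_distrib_left, rule sum.cong[OF refl])
      fix j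
      have "dq m j / Q^j * ((x + r) * piq (Suc j) x) = dq m j * (x + r) * (piq (Suc j) x / Q^j)"
        by (simp add: field_simps)
      also have "\<dots> = (x - 1) * (x + r) * (dq m j * piq j (x/Q))"
        unfolding piq_divQ[symmetric] by (simp add: mult_ac)
      finally show "(x - 1) * (x + r) * (dq m j * piq j (x/Q)) = dq m j / Q^j * ((x + r) * piq (Suc j) x)" by simp
    qed
    also have "\<dots> = (\<Sum>j<Suc m. dq m j / Q^j * piq (Suc (Suc j)) x) + (\<Sum>j<Suc m. dq m j / Q^j * (Q^Suc j + r) * piq (Suc j) x)"
    proof (simp only: sum.distrib[symmetric], rule sum.cong[OF refl])
      fix j
      show "dq m j / Q^j * ((x + r) * piq (Suc j) x) = dq m j / Q^j * piq (Suc (Suc j)) x + dq m j / Q^j * (Q^Suc j + r) * piq (Suc j) x"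
        using Q0 by (simp only: piq_Suc[of "Suc j" x]) (simp add: field_simps)
    qed
    also have "(\<Sum>j<Suc m. dq m j / Q^j * piq (Suc (Suc j)) x) = (\<Sum>s<Suc (Suc (Suc m)). (if s < 2 then 0 else dq m (s - 2) / Q^(s - 2) * piq s x))"
      by (rule sym, subst sum.lessThan_Suc_shift, subst sum.lessThan_Suc_shift, simp add: numeral_2_eq_2)
    also have "(\<Sum>j<Suc m. dq m j / Q^j * (Q^Suc j + r) * piq (Suc j) x) = (\<Sum>j<Suc (Suc m). dq m j / Q^j * (Q^Suc j + r) * piq (Suc j) x)"
      by (simp add: dq_vanish)
    also have "\<dots> = (\<Sum>s<Suc (Suc (Suc m)). (if s = 0 then 0 else dq m (s - 1) / Q^(s - 1) * (Q^s + r) * piq s x))"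
      by (rule sym, subst sum.lessThan_Suc_shift, simp)
    moreover have "r * uq m x = (\<Sum>s<Suc (Suc (Suc m)). r * dq m s * piq s x)"
    proof -
      have h: "m < Suc (Suc (Suc m))" by simp
      show ?thesis by (simp only: uq_ext[OF h, of x] sum_distrib_left mult.assoc)
    qed
    ultimately show ?thesis
      by (simp only: sum.distrib[symmetric]) (rule sum.cong[OF refl], simp add: cR_def algebra_simps)
  qed
  show ?thesis unfolding L R cL_cR ..
qed

end



context qs begin

definition ee :: "nat \<Rightarrow> real" where "ee n = (\<Prod>i<n. Q^i) / qpoch Q Q n"

lemma ee_0[simp]: "ee 0 = 1" by (simp add: ee_def)
lemma ee_Suc: "ee (Suc n) = ee n * Q^n / (1 - Q^Suc n)"
  by (simp add: ee_def qpoch_Suc)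
lemma ee_pos: "ee n > 0"
  unfolding ee_def using QQ_pos Q0 by (simp add: prod_pos)

lemma summable_ee: "summable (\<lambda>n. ee n * z^n)"
proof -
  have "(\<lambda>n. Q^n) \<longlonglongrightarrow> 0" using Q0 Q1 by (intro LIMSEQ_power_zero) simp
  moreover have "0 < (1 - Q) / (2 * (\<bar>z\<bar> + 1))" using Q1 by (simp add: add_pos_nonneg)
  ultimately have "eventually (\<lambda>n. Q^n < (1 - Q) / (2 * (\<bar>z\<bar> + 1))) sequentially"
    by (rule order_tendstoD)
  then obtain N where N: "\<And>n. n \<ge> N \<Longrightarrow> Q^n < (1 - Q) / (2 * (\<bar>z\<bar> + 1))"
    unfolding eventually_sequentially by blast
  show ?thesis
  proof (rule summable_ratio_test[of "1/2" N])
    fix n assume "N \<le> n"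
    then have h: "Q^n < (1 - Q) / (2 * (\<bar>z\<bar> + 1))" by (rule N)
    have q1: "1 - Q \<le> 1 - Q^Suc n" using Q0 Q1 by (simp add: power_le_one mult_left_le)
    have q2: "0 < 1 - Q^Suc n" using Qpow_lt1[of "Suc n"] by simp
    have "Q^n * \<bar>z\<bar> \<le> (1 - Q) / 2"
    proof -
      have "Q^n * \<bar>z\<bar> \<le> Q^n * (\<bar>z\<bar> + 1)" using Qpow_pos[of n] by simp
      also have "\<dots> \<le> (1 - Q) / (2 * (\<bar>z\<bar> + 1)) * (\<bar>z\<bar> + 1)"
        using h by (intro mult_right_mono) auto
      also have "\<dots> = (1 - Q) / 2"
      proof -
        have "\<bar>z\<bar> + 1 > 0" by simp
        then show ?thesis by (simp add: field_simps)
      qed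
      finally show ?thesis .
    qed
    then have r1: "Q^n * \<bar>z\<bar> / (1 - Q^Suc n) \<le> 1/2"
      using q1 q2 by (simp add: divide_simps)
    have "norm (ee (Suc n) * z^Suc n) = (Q^n * \<bar>z\<bar> / (1 - Q^Suc n)) * norm (ee n * z^n)"
      using ee_pos[of n] q2 Q0 by (simp add: ee_Suc abs_mult power_abs)
    also have "\<dots> \<le> 1/2 * norm (ee n * z^n)"
      by (rule mult_right_mono[OF r1]) simp
    finally show "norm (ee (Suc n) * z^Suc n) \<le> 1/2 * norm (ee n * z^n)" .
  qed simp
qed

definition fe :: "real \<Rightarrow> real" where "fe z = (\<Sum>n. ee n * z^n)"

lemma fe_func: "fe z = (1 + z) * fe (Q*z)"
proof -
  have s1: "summable (\<lambda>n. ee n * z^n)" by (rule summable_ee)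
  have s2: "summable (\<lambda>n. ee n * (Q*z)^n)" by (rule summable_ee)
  have "fe z - fe (Q*z) = (\<Sum>n. ee n * z^n - ee n * (Q*z)^n)"
    unfolding fe_def by (rule suminf_diff[OF s1 s2])
  also have "\<dots> = (\<Sum>n. ee (Suc n) * z^Suc n - ee (Suc n) * (Q*z)^Suc n)"
    using suminf_split_head[OF summable_diff[OF s1 s2]] by simp
  also have "\<dots> = (\<Sum>n. z * (ee n * (Q*z)^n))"
  proof (rule arg_cong[where f=suminf], rule ext)
    fix n
    have q2: "1 - Q^Suc n \<noteq> 0" using Qpow_lt1[of "Suc n"] by simp
    have "ee (Suc n) * z^Suc n - ee (Suc n) * (Q*z)^Suc n = (ee (Suc n) * (1 - Q^Suc n)) * z^Suc n"
      by (simp add: power_mult_distrib algebra_simps)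
    also have "ee (Suc n) * (1 - Q^Suc n) = ee n * Q^n" using q2 by (simp add: ee_Suc)
    finally show "ee (Suc n) * z^Suc n - ee (Suc n) * (Q*z)^Suc n = z * (ee n * (Q*z)^n)"
      by (simp add: power_mult_distrib mult_ac)
  qed
  also have "\<dots> = z * fe (Q*z)" unfolding fe_def by (rule suminf_mult[OF s2])
  finally show ?thesis by (simp add: algebra_simps)
qed

lemma fe_iter: "fe z = (\<Prod>i<N. 1 + z * Q^i) * fe (Q^N * z)"
proof (induction N arbitrary: z)
  case 0 then show ?case by simp
next
  case (Suc N)
  have "fe z = (1 + z) * fe (Q*z)" by (rule fe_func)
  also have "\<dots> = (1 + z) * ((\<Prod>i<N. 1 + Q * z * Q^i) * fe (Q^N * (Q*z)))" by (subst Suc.IH[of "Q*z"]) (rule refl)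
  also have "\<dots> = (\<Prod>i<Suc N. 1 + z * Q^i) * fe (Q^Suc N * z)"
    by (subst prod.lessThan_Suc_shift) (simp add: mult_ac)
  finally show ?case .
qed

lemma euler: "(\<Prod>i. 1 + z * Q^i) = fe z"
proof -
  let ?P = "\<lambda>N. \<Prod>i<N. 1 + z * Q^i"
  have c: "isCont fe 0" unfolding fe_def
    by (rule isCont_powser_converges_everywhere) (rule summable_ee)
  have f0: "fe 0 = 1" unfolding fe_def using powser_zero[of ee] by simp
  have "(\<lambda>N. Q^N * z) \<longlonglongrightarrow> 0 * z" using Q0 Q1 by (intro tendsto_intros) simp
  then have "(\<lambda>N. fe (Q^N * z)) \<longlonglongrightarrow> 1" using isCont_tendsto_compose[OF c] f0 by fastforce
  then have lim1: "(\<lambda>N. fe z / fe (Q^N * z)) \<longlonglongrightarrow> fe z / 1"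
    by (intro tendsto_intros) simp_all
  have ev: "eventually (\<lambda>N. fe (Q^N * z) \<noteq> 0) sequentially"
    using \<open>(\<lambda>N. fe (Q^N * z)) \<longlonglongrightarrow> 1\<close> by (rule tendsto_imp_eventually_ne) simp
  have lim2: "?P \<longlonglongrightarrow> fe z"
  proof (rule Lim_transform_eventually[OF lim1[simplified]])
    show "eventually (\<lambda>N. fe z / fe (Q^N * z) = ?P N) sequentially"
      using ev
    proof eventually_elim
      case (elim N)
      show ?case using fe_iter[of z N] elim by (simp add: field_simps)
    qed
  qed
  have e: "(\<lambda>i. norm (1 + z * Q^i - 1)) = (\<lambda>i. \<bar>z\<bar> * Q^i)"
    using Q0 by (simp add: abs_mult)
  have "summable (\<lambda>i. \<bar>z\<bar> * Q^i)"
    using Q0 Q1 by (intro summable_mult summable_geometric) simp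
  then have "summable (\<lambda>i. norm (1 + z * Q^i - 1))" unfolding e .
  then have cp: "convergent_prod (\<lambda>i. 1 + z * Q^i)"
    by (intro abs_convergent_prod_imp_convergent_prod summable_imp_abs_convergent_prod)
  have "(\<lambda>n. \<Prod>i\<le>n. 1 + z * Q^i) \<longlonglongrightarrow> (\<Prod>i. 1 + z * Q^i)" by (rule convergent_prod_LIMSEQ[OF cp])
  moreover have "(\<lambda>n. \<Prod>i\<le>n. 1 + z * Q^i) \<longlonglongrightarrow> fe z"
    using LIMSEQ_Suc[OF lim2] by (simp add: lessThan_Suc_atMost)
  ultimately show ?thesis by (rule LIMSEQ_unique)
qed

end



context qs begin

definition W :: "nat \<Rightarrow> real" where "W n = ee n * (Q*r)^n"
definition S :: "real \<Rightarrow> real \<Rightarrow> real" where "S x y = (\<Sum>n. W n * uq n x * uq n y)"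
definition T :: "real \<Rightarrow> real \<Rightarrow> real" where "T x y = (\<Sum>n. W n * uq n x * uq (Suc n) y)"
definition good :: "real \<Rightarrow> bool" where
  "good x \<longleftrightarrow> (\<exists>C K. 0 \<le> C \<and> 0 \<le> K \<and> (\<forall>n. \<bar>uq n x\<bar> \<le> C * K^n))"

lemma W_Suc: "W (Suc n) * ((1 - Q^Suc n) / (r * Q^n)) = Q * W n"
proof -
  have q2: "1 - Q^Suc n \<noteq> 0" using Qpow_lt1[of "Suc n"] by simp
  show ?thesis unfolding W_def ee_Suc using q2 Q0 r0 by (simp add: field_simps)
qed

lemma summable_bound:
  assumes "\<And>n. \<bar>f n\<bar> \<le> C * K^n"
  shows "summable (\<lambda>n. W n * f n)"
proof (rule summable_comparison_test'[where N=0])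
  show "summable (\<lambda>n. C * (ee n * (Q*r*K)^n))" by (intro summable_mult summable_ee)
next
  fix n
  have "norm (W n * f n) = W n * \<bar>f n\<bar>"
    unfolding W_def using ee_pos[of n] Q0 r0 by (simp add: abs_mult)
  also have "\<dots> \<le> W n * (C * K^n)"
    using assms[of n] ee_pos[of n] Q0 r0 unfolding W_def by (intro mult_left_mono) auto
  also have "\<dots> = C * (ee n * (Q*r*K)^n)" unfolding W_def by (simp add: power_mult_distrib)
  finally show "norm (W n * f n) \<le> C * (ee n * (Q*r*K)^n)" .
qed

lemma summable_S:
  assumes "good x" "good y"
  shows "summable (\<lambda>n. W n * uq n x * uq n y)"
proof -
  obtain C K where CK: "0 \<le> C" "0 \<le> K" "\<And>n. \<bar>uq n x\<bar> \<le> C * K^n" using assms(1) unfolding good_def by blast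
  obtain C' K' where CK': "0 \<le> C'" "0 \<le> K'" "\<And>n. \<bar>uq n y\<bar> \<le> C' * K'^n" using assms(2) unfolding good_def by blast
  have "\<And>n. \<bar>uq n x * uq n y\<bar> \<le> (C*C') * (K*K')^n"
  proof -
    fix n
    have "\<bar>uq n x * uq n y\<bar> \<le> (C * K^n) * (C' * K'^n)"
      unfolding abs_mult by (rule mult_mono[OF CK(3) CK'(3)]) (use CK CK' in auto)
    then show "\<bar>uq n x * uq n y\<bar> \<le> (C*C') * (K*K')^n" by (simp add: power_mult_distrib mult_ac)
  qed
  from summable_bound[OF this] show ?thesis by (simp add: mult_ac)
qed

lemma summable_T:
  assumes "good x" "good y"
  shows "summable (\<lambda>n. W n * uq n x * uq (Suc n) y)"
proof -
  obtain C K where CK: "0 \<le> C" "0 \<le> K" "\<And>n. \<bar>uq n x\<bar> \<le> C * K^n" using assms(1) unfolding good_def by blast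
  obtain C' K' where CK': "0 \<le> C'" "0 \<le> K'" "\<And>n. \<bar>uq n y\<bar> \<le> C' * K'^n" using assms(2) unfolding good_def by blast
  have "\<And>n. \<bar>uq n x * uq (Suc n) y\<bar> \<le> (C*C'*K') * (K*K')^n"
  proof -
    fix n
    have "\<bar>uq n x * uq (Suc n) y\<bar> \<le> (C * K^n) * (C' * K'^Suc n)"
      unfolding abs_mult by (rule mult_mono[OF CK(3) CK'(3)]) (use CK CK' in auto)
    then show "\<bar>uq n x * uq (Suc n) y\<bar> \<le> (C*C'*K') * (K*K')^n" by (simp add: power_mult_distrib mult_ac)
  qed
  from summable_bound[OF this] show ?thesis by (simp add: mult_ac)
qed

lemma uq_one: "uq n 1 = 1"
proof -
  have "\<And>j. j \<in> {..n} - {0} \<Longrightarrow> dq n j * piq j 1 = 0"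
  proof -
    fix j assume "j \<in> {..n} - {0}"
    then obtain j' where "j = Suc j'" by (cases j) auto
    then have "piq j 1 = 0" unfolding piq_def by (intro prod_zero) (auto intro!: bexI[of _ 0])
    then show "dq n j * piq j 1 = 0" by simp
  qed
  then have "uq n 1 = (\<Sum>j\<in>{0}. dq n j * piq j 1)" unfolding uq_def
    by (intro sum.mono_neutral_right) auto
  then show ?thesis by simp
qed

lemma uq_mr: "uq n (-r) = (-1/r)^n"
proof (induction n)
  case 0 then show ?case by simp
next
  case (Suc n)
  have "r * (r * uq (Suc n) (-r) + uq n (-r)) = 0" using B_id[of "-r" n] by (simp add: algebra_simps)
  then have "r * uq (Suc n) (-r) + uq n (-r) = 0" using r0 by simp
  then have "uq (Suc n) (-r) = -(1/r) * uq n (-r)" using r0 by (simp add: field_simps)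
  then show ?case using Suc.IH by simp
qed

lemma good_one: "good 1"
  unfolding good_def by (rule exI[of _ 1], rule exI[of _ 1]) (simp add: uq_one)

lemma good_mr: "good (-r)"
  unfolding good_def using r0 by (intro exI[of _ 1] exI[of _ "1/r"]) (simp add: uq_mr power_abs)

lemma good_Q:
  assumes "good x" shows "good (Q*x)"
proof -
  obtain C K where CK: "0 \<le> C" "0 \<le> K" "\<And>n. \<bar>uq n x\<bar> \<le> C * K^n" using assms unfolding good_def by blast
  define K' where "K' = max K 1 / Q"
  define C' where "C' = C * (1 + \<bar>x\<bar> / r) + 1"
  have K'1: "1 \<le> K'" unfolding K'_def using Q0 Q1 by (simp add: field_simps)
  have KK': "K \<le> K'"
  proof -
    have "max K 1 * Q \<le> max K 1 * 1" using Q1 by (intro mult_left_mono) auto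
    then have "max K 1 \<le> max K 1 / Q" using Q0 by (simp add: le_divide_eq)
    then show ?thesis unfolding K'_def by linarith
  qed
  have C'0: "0 \<le> C'" unfolding C'_def using CK r0 by simp
  have "\<forall>n. \<bar>uq n (Q*x)\<bar> \<le> C' * K'^n"
  proof
    fix n show "\<bar>uq n (Q*x)\<bar> \<le> C' * K'^n"
    proof (cases n)
      case 0 then show ?thesis unfolding C'_def using CK r0 by simp
    next
      case (Suc m)
      have q2: "0 < 1 - Q^Suc m" "1 - Q^Suc m \<le> 1" using Qpow_lt1[of "Suc m"] Qpow_pos[of "Suc m"] by auto
      have e: "uq (Suc m) (Q*x) = uq (Suc m) x - (1 - Q^Suc m) / (r * Q^m) * x * uq m x"
        using F_id[of m x] by simp
      have b1: "\<bar>uq (Suc m) x\<bar> \<le> C * K'^Suc m"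
      proof -
        have "K^Suc m \<le> K'^Suc m" by (rule power_mono[OF KK' CK(2)])
        then have "C * K^Suc m \<le> C * K'^Suc m" using CK(1) by (rule mult_left_mono)
        then show ?thesis using CK(3)[of "Suc m"] by linarith
      qed
      have b2: "\<bar>(1 - Q^Suc m) / (r * Q^m) * x * uq m x\<bar> \<le> \<bar>x\<bar> / r * (C * K'^Suc m)"
      proof -
        have "\<bar>(1 - Q^Suc m) / (r * Q^m) * x * uq m x\<bar> = (1 - Q^Suc m) / (r * Q^m) * \<bar>x\<bar> * \<bar>uq m x\<bar>"
          using q2 r0 Q0 by (simp add: abs_mult)
        also have "\<dots> \<le> 1 / (r * Q^m) * \<bar>x\<bar> * (C * K^m)"
          using q2 r0 Q0 CK(3)[of m] by (intro mult_mono divide_right_mono) auto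
        also have "\<dots> = \<bar>x\<bar> / r * (C * (K / Q)^m)" by (simp add: power_divide)
        also have "\<dots> \<le> \<bar>x\<bar> / r * (C * K'^m)"
        proof -
          have "K / Q \<le> K'" unfolding K'_def using Q0 by (simp add: divide_right_mono)
          then have "(K/Q)^m \<le> K'^m" using CK(2) Q0 by (intro power_mono) auto
          then show ?thesis using CK(1) r0 by (intro mult_left_mono) auto
        qed
        also have "\<dots> \<le> \<bar>x\<bar> / r * (C * K'^Suc m)"
          using K'1 CK(1) r0 by (intro mult_left_mono) (auto intro: power_increasing)
        finally show ?thesis .
      qed
      have "\<bar>uq n (Q*x)\<bar> \<le> C * K'^Suc m + \<bar>x\<bar> / r * (C * K'^Suc m)"
        unfolding Suc e using b1 b2 by linarith
      also have "\<dots> \<le> C' * K'^Suc m"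
      proof -
        have "0 \<le> K'^Suc m" using K'1 by simp
        then show ?thesis unfolding C'_def by (simp add: algebra_simps)
      qed
      finally show ?thesis using Suc by simp
    qed
  qed
  moreover have "0 \<le> K'" using K'1 by simp
  ultimately show ?thesis unfolding good_def using C'0 by blast
qed

end



context qs begin

lemma S_sym: "S x y = S y x" unfolding S_def by (simp add: mult_ac)

lemma S_shift:
  assumes gx: "good x" and gy: "good y" and gQx: "good (Q*x)"
  shows "S (Q*x) y = S x y - Q*x*T x y"
proof -
  let ?h = "\<lambda>n. W n * uq n (Q*x) * uq n y"
  let ?g = "\<lambda>n. W n * uq n x * uq n y"
  let ?t = "\<lambda>n. W n * uq n x * uq (Suc n) y"
  have sh: "summable ?h" by (rule summable_S[OF gQx gy])
  have sg: "summable ?g" by (rule summable_S[OF gx gy])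
  have st: "summable ?t" by (rule summable_T[OF gx gy])
  have sg': "summable (\<lambda>n. ?g (Suc n))" using sg by (subst summable_Suc_iff)
  have st': "summable (\<lambda>n. Q*x*?t n)" using st by (rule summable_mult)
  have pt: "\<And>n. ?h (Suc n) = ?g (Suc n) - Q*x*?t n"
  proof -
    fix n
    have "?h (Suc n) = W (Suc n) * (uq (Suc n) x - (1 - Q^Suc n) / (r * Q^n) * x * uq n x) * uq (Suc n) y"
      using F_id[of n x] by (simp add: algebra_simps)
    also have "\<dots> = ?g (Suc n) - (W (Suc n) * ((1 - Q^Suc n) / (r * Q^n))) * x * uq n x * uq (Suc n) y"
      by (simp add: algebra_simps)
    also have "\<dots> = ?g (Suc n) - Q*x*?t n" unfolding W_Suc by (simp add: mult_ac)
    finally show "?h (Suc n) = ?g (Suc n) - Q*x*?t n" .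
  qed
  have "S (Q*x) y = ?h 0 + (\<Sum>n. ?h (Suc n))" unfolding S_def using suminf_split_head[OF sh] by simp
  also have "(\<Sum>n. ?h (Suc n)) = (\<Sum>n. ?g (Suc n)) - (\<Sum>n. Q*x*?t n)"
    unfolding pt by (rule suminf_diff[OF sg' st', symmetric])
  also have "(\<Sum>n. ?g (Suc n)) = S x y - ?g 0" unfolding S_def by (rule suminf_split_head[OF sg])
  also have "(\<Sum>n. Q*x*?t n) = Q*x*T x y" unfolding T_def by (rule suminf_mult[OF st])
  finally show ?thesis by (simp add: W_def)
qed

lemma T_rel:
  assumes gx: "good x" and gy: "good y" and alt: "good (y/Q) \<or> (y - 1) * (y + r) = 0"
  shows "r*y*T x y = (y - 1)*(y + r)*S x (y/Q) + r*S x y"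
proof -
  let ?g = "\<lambda>n. W n * uq n x * uq n y"
  let ?t = "\<lambda>n. W n * uq n x * uq (Suc n) y"
  let ?k = "\<lambda>n. W n * uq n x * uq n (y/Q)"
  have sg: "summable ?g" by (rule summable_S[OF gx gy])
  have st: "summable ?t" by (rule summable_T[OF gx gy])
  have pt: "\<And>n. r*y*?t n = (y - 1)*(y + r)*?k n + r*?g n"
  proof -
    fix n
    have "r*y*?t n = W n * uq n x * (y * r * uq (Suc n) y)" by (simp add: mult_ac)
    also have "\<dots> = W n * uq n x * ((y - 1) * (y + r) * uq n (y/Q) + r * uq n y)" by (simp only: B_id)
    also have "\<dots> = (y - 1)*(y + r)*?k n + r*?g n" by (simp add: algebra_simps)
    finally show "r*y*?t n = (y - 1)*(y + r)*?k n + r*?g n" .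
  qed
  have "r*y*T x y = (\<Sum>n. r*y*?t n)" unfolding T_def by (rule suminf_mult[OF st, symmetric])
  also have "\<dots> = (\<Sum>n. (y - 1)*(y + r)*?k n + r*?g n)" unfolding pt ..
  also have "\<dots> = (y - 1)*(y + r)*S x (y/Q) + r*S x y"
  proof (cases "(y - 1) * (y + r) = 0")
    case True
    then show ?thesis by (simp only: True mult_zero_left add_0_left S_def suminf_mult[OF sg])
  next
    case False
    then have gyQ: "good (y/Q)" using alt by simp
    have sk: "summable ?k" by (rule summable_S[OF gx gyQ])
    have "(\<Sum>n. (y - 1)*(y + r)*?k n + r*?g n) = (\<Sum>n. (y - 1)*(y + r)*?k n) + (\<Sum>n. r*?g n)"
      by (rule suminf_add[symmetric]) (intro summable_mult sk sg)+
    also have "\<dots> = (y - 1)*(y + r)*S x (y/Q) + r*S x y"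
      unfolding S_def by (simp add: suminf_mult[OF sk] suminf_mult[OF sg])
    finally show ?thesis .
  qed
  finally show ?thesis .
qed

lemma MR:
  assumes gx: "good x" and gy: "good y" and alt: "good (y/Q) \<or> (y - 1) * (y + r) = 0" and y0: "y \<noteq> 0"
  shows "S (Q*x) y = (1 - Q*x/y) * S x y - Q*x*(y - 1)*(y + r)/(r*y) * S x (y/Q)"
proof -
  have r: "r \<noteq> 0" using r0 by simp
  show ?thesis by (rule alg_MR[OF r y0 S_shift[OF gx gy good_Q[OF gx]] T_rel[OF gx gy alt]])
qed

lemma good_B: "good (Q^k)"
  by (induction k) (simp_all add: good_one good_Q)
lemma good_A: "good (-r*Q^k)"
proof (induction k)
  case 0 then show ?case using good_mr by simp
next
  case (Suc k)
  have e: "-r*Q^Suc k = Q*(-r*Q^k)" by simp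
  show ?case by (subst e) (rule good_Q[OF Suc.IH])
qed

lemma S_11: "S 1 1 = fe (Q*r)"
  unfolding S_def fe_def W_def by (simp add: uq_one)
lemma S_AA0: "S (-r) (-r) = fe (Q/r)"
proof -
  have "\<And>n. W n * uq n (-r) * uq n (-r) = ee n * (Q/r)^n"
  proof -
    fix n
    have "(Q*r)^n * (-1/r)^n * (-1/r)^n = (Q*r*(-1/r)*(-1/r))^n" by (simp only: power_mult_distrib)
    also have "Q*r*(-1/r)*(-1/r) = Q/r" using r0 by (simp add: field_simps)
    finally have h: "(Q*r)^n * (-1/r)^n * (-1/r)^n = (Q/r)^n" .
    have "W n * uq n (-r) * uq n (-r) = ee n * ((Q*r)^n * (-1/r)^n * (-1/r)^n)"
      unfolding W_def uq_mr by (simp only: mult.assoc)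
    then show "W n * uq n (-r) * uq n (-r) = ee n * (Q/r)^n" unfolding h .
  qed
  then show ?thesis unfolding S_def fe_def by simp
qed
lemma S_AB0: "S (-r) 1 = fe (-Q)"
proof -
  have "\<And>n. W n * uq n (-r) * uq n 1 = ee n * (-Q)^n"
  proof -
    fix n
    have "(Q*r)^n * (-1/r)^n = (Q*r*(-1/r))^n" by (simp only: power_mult_distrib)
    also have "Q*r*(-1/r) = -Q" using r0 by (simp add: field_simps)
    finally have h: "(Q*r)^n * (-1/r)^n = (-Q)^n" .
    have "W n * uq n (-r) * uq n 1 = ee n * ((Q*r)^n * (-1/r)^n)"
      unfolding W_def uq_mr uq_one by (simp only: mult.assoc mult_1_right)
    then show "W n * uq n (-r) * uq n 1 = ee n * (-Q)^n" unfolding h .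
  qed
  then show ?thesis unfolding S_def fe_def by simp
qed

end



context qs begin

lemma divQ: "Q*z/Q = z" using Q0 by simp
lemma divQ': "(-r*(Q*z))/Q = -r*z" using Q0 by simp

lemma S_BB: "l \<le> k \<Longrightarrow> S (Q^k) (Q^l) = fe (Q*r) * qpoch Q Q k * qpoch (-(Q/r)) Q l"
proof (induction k arbitrary: l)
  case 0 then show ?case using S_11 by simp
next
  case (Suc k)
  have K: "Q \<noteq> 0" and r: "r \<noteq> 0" using Q0 r0 by auto
  show ?case
  proof (cases l)
    case 0
    have "S (Q*Q^k) 1 = (1 - Q*Q^k/1) * S (Q^k) 1 - Q*Q^k*(1 - 1)*(1 + r)/(r*1) * S (Q^k) (1/Q)"
      by (rule MR[OF good_B good_one]) simp_all
    also have "S (Q^k) 1 = fe (Q*r) * qpoch Q Q k" using Suc.IH[of 0] by simp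
    finally show ?thesis using 0 by (simp add: qpoch_Suc)
  next
    case (Suc l')
    have v: "Q^l' \<noteq> 0" using Qpow_pos[of l'] by linarith
    have gy: "good (Q*Q^l'/Q)" unfolding divQ by (rule good_B)
    have y0: "Q*Q^l' \<noteq> 0" using K v by simp
    have m: "S (Q*Q^k) (Q*Q^l') = (1 - Q*Q^k/(Q*Q^l')) * S (Q^k) (Q*Q^l') - Q*Q^k*(Q*Q^l' - 1)*(Q*Q^l' + r)/(r*(Q*Q^l')) * S (Q^k) (Q^l')"
      using MR[OF good_B good_Q[OF good_B] disjI1[OF gy] y0] unfolding divQ .
    have l'k: "l' \<le> k" using Suc.prems Suc by simp
    have IH1: "S (Q^k) (Q^l') = fe (Q*r) * qpoch Q Q k * qpoch (-(Q/r)) Q l'" by (rule Suc.IH[OF l'k])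
    have alt: "S (Q^k) (Q*Q^l') = fe (Q*r) * qpoch Q Q k * qpoch (-(Q/r)) Q l' * (1 - (-(Q/r)) * Q^l') \<or> Q^k = Q^l'"
    proof (cases "l' = k")
      case True then show ?thesis by simp
    next
      case False
      then have "Suc l' \<le> k" using l'k by simp
      from Suc.IH[OF this] show ?thesis by (simp add: qpoch_Suc mult_ac)
    qed
    have "S (Q^Suc k) (Q^l) = fe (Q*r) * (qpoch Q Q k * (1 - Q*Q^k)) * (qpoch (-(Q/r)) Q l' * (1 - (-(Q/r)) * Q^l'))"
      unfolding Suc power_Suc m IH1 by (rule alg_BB[OF K r v alt])
    then show ?thesis unfolding Suc by (simp only: qpoch_Suc power_Suc)
  qed
qed


lemma S_AA: "l \<le> k \<Longrightarrow> S (-r*Q^k) (-r*Q^l) = fe (Q/r) * qpoch Q Q k * qpoch (-(Q*r)) Q l"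
proof (induction k arbitrary: l)
  case 0 then show ?case using S_AA0 by simp
next
  case (Suc k)
  have K: "Q \<noteq> 0" and r: "r \<noteq> 0" using Q0 r0 by auto
  have e1: "-r*Q^Suc k = Q*(-r*Q^k)" by simp
  show ?case
  proof (cases l)
    case 0
    have "S (Q*(-r*Q^k)) (-r) = (1 - Q*(-r*Q^k)/(-r)) * S (-r*Q^k) (-r) - Q*(-r*Q^k)*(-r - 1)*(-r + r)/(r*(-r)) * S (-r*Q^k) (-r/Q)"
      by (rule MR[OF good_A good_mr]) (use r in simp_all)
    also have "S (-r*Q^k) (-r) = fe (Q/r) * qpoch Q Q k" using Suc.IH[of 0] by simp
    also have "Q*(-r*Q^k)/(-r) = Q*Q^k" using r by simp
    finally show ?thesis using 0 by (simp add: qpoch_Suc mult_ac)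
  next
    case (Suc l')
    have v: "Q^l' \<noteq> 0" using Qpow_pos[of l'] by linarith
    have e2: "-r*Q^Suc l' = -r*(Q*Q^l')" by simp
    have gy0: "good (-r*(Q*Q^l'))" using good_A[of "Suc l'"] by (simp only: power_Suc)
    have gy: "good (-r*(Q*Q^l')/Q)" unfolding divQ' by (rule good_A)
    have y0: "-r*(Q*Q^l') \<noteq> 0" using K v r by simp
    have m: "S (Q*(-r*Q^k)) (-r*(Q*Q^l')) = (1 - Q*(-r*Q^k)/(-r*(Q*Q^l'))) * S (-r*Q^k) (-r*(Q*Q^l')) - Q*(-r*Q^k)*(-r*(Q*Q^l') - 1)*(-r*(Q*Q^l') + r)/(r*(-r*(Q*Q^l'))) * S (-r*Q^k) (-r*Q^l')"
      using MR[OF good_A gy0 disjI1[OF gy] y0] unfolding divQ' .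
    have l'k: "l' \<le> k" using Suc.prems Suc by simp
    have IH1: "S (-r*Q^k) (-r*Q^l') = fe (Q/r) * qpoch Q Q k * qpoch (-(Q*r)) Q l'" by (rule Suc.IH[OF l'k])
    have alt: "S (-r*Q^k) (-r*(Q*Q^l')) = fe (Q/r) * qpoch Q Q k * qpoch (-(Q*r)) Q l' * (1 - (-(Q*r)) * Q^l') \<or> Q^k = Q^l'"
    proof (cases "l' = k")
      case True then show ?thesis by simp
    next
      case False
      then have "Suc l' \<le> k" using l'k by simp
      from Suc.IH[OF this] show ?thesis by (simp add: qpoch_Suc mult_ac)
    qed
    have "S (Q*(-r*Q^k)) (-r*(Q*Q^l')) = fe (Q/r) * (qpoch Q Q k * (1 - Q*Q^k)) * (qpoch (-(Q*r)) Q l' * (1 - (-(Q*r)) * Q^l'))"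
      unfolding m IH1 by (rule alg_AA[OF K r v alt])
    then show ?thesis unfolding Suc e1 e2 by (simp only: qpoch_Suc power_Suc)
  qed
qed

lemma S_AB: "S (-r*Q^k) (Q^l) = fe (-Q) * qpoch (-(Q*r)) Q k * qpoch (-(Q/r)) Q l"
proof (induction k arbitrary: l)
  case 0
  have K: "Q \<noteq> 0" and r: "r \<noteq> 0" using Q0 r0 by auto
  show ?case
  proof (induction l)
    case 0 then show ?case using S_AB0 by simp
  next
    case (Suc l)
    have "S (-r*Q^0) (Q^Suc l) = S (Q*Q^l) (-r)" by (simp add: S_sym)
    also have "\<dots> = (1 - Q*Q^l/(-r)) * S (Q^l) (-r) - Q*Q^l*(-r - 1)*(-r + r)/(r*(-r)) * S (Q^l) (-r/Q)"
      by (rule MR[OF good_B good_mr]) (use r in simp_all)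
    also have "S (Q^l) (-r) = fe (-Q) * qpoch (-(Q/r)) Q l" using Suc.IH by (simp add: S_sym)
    also have "1 - Q*Q^l/(-r) = 1 - (-(Q/r)) * Q^l" using r by (simp add: field_simps)
    finally show ?case by (simp add: qpoch_Suc mult_ac)
  qed
next
  case (Suc k)
  have K: "Q \<noteq> 0" and r: "r \<noteq> 0" using Q0 r0 by auto
  have e1: "-r*Q^Suc k = Q*(-r*Q^k)" by simp
  show ?case
  proof (cases l)
    case 0
    have "S (Q*(-r*Q^k)) 1 = (1 - Q*(-r*Q^k)/1) * S (-r*Q^k) 1 - Q*(-r*Q^k)*(1 - 1)*(1 + r)/(r*1) * S (-r*Q^k) (1/Q)"
      by (rule MR[OF good_A good_one]) simp_all
    also have "S (-r*Q^k) 1 = fe (-Q) * qpoch (-(Q*r)) Q k" using Suc.IH[of 0] by simp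
    also have "1 - Q*(-r*Q^k)/1 = 1 - (-(Q*r)) * Q^k" by simp
    finally show ?thesis using 0 by (simp add: qpoch_Suc e1 mult_ac)
  next
    case (Suc l')
    have v: "Q^l' \<noteq> 0" using Qpow_pos[of l'] by linarith
    have gy: "good (Q*Q^l'/Q)" unfolding divQ by (rule good_B)
    have y0: "Q*Q^l' \<noteq> 0" using K v by simp
    have m: "S (Q*(-r*Q^k)) (Q*Q^l') = (1 - Q*(-r*Q^k)/(Q*Q^l')) * S (-r*Q^k) (Q*Q^l') - Q*(-r*Q^k)*(Q*Q^l' - 1)*(Q*Q^l' + r)/(r*(Q*Q^l')) * S (-r*Q^k) (Q^l')"
      using MR[OF good_A good_Q[OF good_B] disjI1[OF gy] y0] unfolding divQ .
    have IH2: "S (-r*Q^k) (Q*Q^l') = fe (-Q) * qpoch (-(Q*r)) Q k * qpoch (-(Q/r)) Q l' * (1 - (-(Q/r)) * Q^l')"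
      using Suc.IH[of "Suc l'"] by (simp add: qpoch_Suc mult_ac)
    have "S (Q*(-r*Q^k)) (Q*Q^l') = fe (-Q) * (qpoch (-(Q*r)) Q k * (1 - (-(Q*r))*Q^k)) * (qpoch (-(Q/r)) Q l' * (1 - (-(Q/r)) * Q^l'))"
      unfolding m IH2 Suc.IH[of l'] by (rule alg_AB[OF K r v])
    then show ?thesis unfolding Suc e1 by (simp only: qpoch_Suc power_Suc)
  qed
qed

end



lemma vvec_prod: "vvec q \<tau> \<phi> a n * cnj (vvec q \<tau> \<phi> b n) = of_real (pn q \<tau> a n * pn q \<tau> b n)"
proof -
  define z where "z = \<i> ^ n * exp (\<i> * of_real (real n * \<phi>))"
  have nz: "norm z = 1" unfolding z_def by (simp add: norm_mult norm_power)
  have zz: "z * cnj z = 1" using complex_norm_square[of z] nz by simp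
  have "vvec q \<tau> \<phi> a n * cnj (vvec q \<tau> \<phi> b n) = (z * cnj z) * of_real (pn q \<tau> a n * pn q \<tau> b n)"
    unfolding vvec_def z_def[symmetric] by (simp add: mult_ac)
  then show ?thesis unfolding zz by simp
qed

lemma prod_qpow:
  assumes q0: "0 < q" shows "(\<Prod>i<n. (q^2)^i) = q powr (real n * (real n - 1))"
proof (induction n)
  case 0 then show ?case using q0 by simp
next
  case (Suc n)
  have e: "(q^2)^n = q powr (real (2*n))" using powr_realpow[OF q0, of "2*n"] by (simp add: power_mult)
  have "(\<Prod>i<Suc n. (q^2)^i) = q powr (real n * (real n - 1)) * q powr (real (2*n))"
    unfolding prod.lessThan_Suc Suc.IH e ..
  also have "\<dots> = q powr (real (Suc n) * (real (Suc n) - 1))"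
    by (simp add: powr_add[symmetric] algebra_simps)
  finally show ?case .
qed

context qs begin

lemma qpoch_piq: "x \<noteq> 0 \<Longrightarrow> qpoch (1/x) Q j * x^j = piq j x"
proof -
  assume x: "x \<noteq> 0"
  have "qpoch (1/x) Q j * x^j = (\<Prod>i<j. (1 - 1/x * Q^i) * x)"
    unfolding qpoch_def by (simp add: prod.distrib)
  also have "\<dots> = piq j x" unfolding piq_def using x by (intro prod.cong) (auto simp: field_simps)
  finally show ?thesis .
qed

lemma phi_uq:
  assumes hQ: "Q = q^2" and hr: "r * c = 1" and q0: "0 < q" and lam: "lam \<noteq> 0"
  shows "phi21 (q powr (- (2 * real n))) (c / lam) 0 (q^2) (- (q^2) * lam) = uq n (r * lam)"
proof -
  define x where "x = r * lam"
  have x0: "x \<noteq> 0" unfolding x_def using r0 lam by simp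
  have a: "q powr (- (2 * real n)) = inverse (Q^n)"
  proof -
    have "q powr (2 * real n) = q powr (real (2*n))" by simp
    also have "\<dots> = q^(2*n)" by (rule powr_realpow[OF q0])
    finally show ?thesis unfolding hQ powr_minus power_mult by simp
  qed
  have b: "c / lam = 1/x" unfolding x_def using hr lam r0 by (simp add: field_simps)
  have z: "- (q^2) * lam = (-Q/r) * x" unfolding x_def hQ using r0 by simp
  have "phi21 (q powr (- (2 * real n))) (c / lam) 0 (q^2) (- (q^2) * lam)
      = (\<Sum>j. qpoch (inverse (Q^n)) Q j * qpoch (1/x) Q j / (qpoch Q Q j * qpoch 0 Q j) * ((-Q/r) * x)^j)"
    unfolding phi21_def a b z hQ ..
  also have "\<dots> = (\<Sum>j\<le>n. qpoch (inverse (Q^n)) Q j * qpoch (1/x) Q j / (qpoch Q Q j * qpoch 0 Q j) * ((-Q/r) * x)^j)"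
    by (rule suminf_finite) (use Q0 qpoch_vanish[of Q n] in auto)
  also have "\<dots> = uq n x" unfolding uq_def
  proof (rule sum.cong[OF refl])
    fix j
    have "qpoch (inverse (Q^n)) Q j * qpoch (1/x) Q j / (qpoch Q Q j * qpoch 0 Q j) * ((-Q/r) * x)^j
        = qpoch (inverse (Q^n)) Q j / qpoch Q Q j * (-Q/r)^j * (qpoch (1/x) Q j * x^j)"
    proof -
      have pw: "((-Q/r) * x)^j = (-Q/r)^j * x^j" by (rule power_mult_distrib)
      have c0: "qpoch Q Q j \<noteq> 0" using QQ_pos[of j] by simp
      have gen: "\<And>a b c d e::real. c \<noteq> 0 \<Longrightarrow> a*b/(c*1)*(d*e) = a/c*d*(b*e)" by (simp add: field_simps)
      show ?thesis unfolding pw qpoch_zero_a by (rule gen[OF c0])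
    qed
    then show "qpoch (inverse (Q^n)) Q j * qpoch (1/x) Q j / (qpoch Q Q j * qpoch 0 Q j) * ((-Q/r) * x)^j = dq n j * piq j x"
      unfolding qpoch_piq[OF x0] dq_def .
  qed
  finally show ?thesis unfolding x_def .
qed

lemma D_inner_S:
  assumes hQ: "Q = q^2" and hr: "r = q powr (- (2 * \<tau>))" and q0: "0 < q"
    and a0: "a \<noteq> 0" and b0: "b \<noteq> 0" and ga: "good (r*a)" and gb: "good (r*b)"
  shows "D_inner q (vvec q \<tau> \<phi> a) (vvec q \<tau> \<phi> b) = of_real (S (r*a) (r*b))"
proof -
  have rc: "r * q powr (2 * \<tau>) = 1" unfolding hr using q0 by (simp add: powr_add[symmetric])
  have pt: "\<And>n. q^(2*n) * (pn q \<tau> a n * pn q \<tau> b n) = W n * uq n (r*a) * uq n (r*b)"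
  proof -
    fix n
    define A where "A = q powr (- (real n * \<tau>))"
    define B where "B = q powr (real n * (real n - 1) / 2)"
    define R where "R = qpoch (q^2) (q^2) n"
    have R0: "0 < R" unfolding R_def using QQ_pos[of n] hQ by simp
    have AA: "A * A = r^n"
    proof -
      have "A * A = q powr (- (2 * \<tau>) * real n)" unfolding A_def by (simp add: powr_add[symmetric] algebra_simps)
      also have "\<dots> = (q powr (- (2 * \<tau>))) powr (real n)" by (simp only: powr_powr)
      also have "\<dots> = r^n" unfolding hr by (rule powr_realpow) (use q0 in simp)
      finally show ?thesis .
    qed
    have BB: "B * B = (\<Prod>i<n. Q^i)" unfolding B_def hQ prod_qpow[OF q0] by (simp add: powr_add[symmetric])
    have pa: "pn q \<tau> a n = A * B / sqrt R * uq n (r*a)"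
      unfolding pn_def A_def B_def R_def using phi_uq[OF hQ rc q0 a0] by simp
    have pb: "pn q \<tau> b n = A * B / sqrt R * uq n (r*b)"
      unfolding pn_def A_def B_def R_def using phi_uq[OF hQ rc q0 b0] by simp
    have sR: "sqrt R * sqrt R = R" using R0 by simp
    have sR0: "sqrt R \<noteq> 0" using R0 by simp
    have gen: "\<And>A B s u v::real. s \<noteq> 0 \<Longrightarrow> (A * B / s * u) * (A * B / s * v) = (A*A) * (B*B) / (s * s) * u * v"
      by (simp add: field_simps)
    have "q^(2*n) * (pn q \<tau> a n * pn q \<tau> b n) = Q^n * ((A*A) * (B*B) / (sqrt R * sqrt R) * uq n (r*a) * uq n (r*b))"
      unfolding pa pb hQ power_mult gen[OF sR0] ..
    also have "\<dots> = Q^n * ((A*A) * (B*B) / (sqrt R * sqrt R)) * uq n (r*a) * uq n (r*b)"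
      by (simp only: mult.assoc)
    also have "\<dots> = W n * uq n (r*a) * uq n (r*b)"
      unfolding AA BB sR W_def ee_def R_def hQ[symmetric] using QQ_pos[of n] by (simp add: power_mult_distrib field_simps)
    finally show "q^(2*n) * (pn q \<tau> a n * pn q \<tau> b n) = W n * uq n (r*a) * uq n (r*b)" .
  qed
  have "D_inner q (vvec q \<tau> \<phi> a) (vvec q \<tau> \<phi> b) = (\<Sum>n. of_real (W n * uq n (r*a) * uq n (r*b)))"
    unfolding D_inner_def
  proof (rule arg_cong[where f=suminf], rule ext)
    fix n
    show "of_real (q^(2*n)) * vvec q \<tau> \<phi> a n * cnj (vvec q \<tau> \<phi> b n) = complex_of_real (W n * uq n (r*a) * uq n (r*b))"
      by (simp only: mult.assoc vvec_prod of_real_mult[symmetric] pt)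
  qed
  also have "\<dots> = of_real (S (r*a) (r*b))"
    unfolding S_def by (rule suminf_of_real[symmetric, OF summable_S[OF ga gb]])
  finally show ?thesis .
qed

end



theorem lemma5p5:
  fixes q \<tau> \<phi> :: real
  assumes "0 < q" "q < 1" "0 \<le> \<phi>" "\<phi> < 2 * pi"
  shows "(\<forall>k l. l \<le> k \<longrightarrow>
            D_inner q (vvec q \<tau> \<phi> (- (q ^ (2 * k)))) (vvec q \<tau> \<phi> (- (q ^ (2 * l))))
            = of_real (qpoch_inf (- (q powr (2 * \<tau> + 2))) (q^2) * qpoch (q^2) (q^2) k
                       * qpoch (- (q powr (2 - 2 * \<tau>))) (q^2) l))
       \<and> (\<forall>k l. l \<le> k \<longrightarrow>
            D_inner q (vvec q \<tau> \<phi> (q powr (2 * \<tau> + 2 * real k))) (vvec q \<tau> \<phi> (q powr (2 * \<tau> + 2 * real l)))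
            = of_real (qpoch_inf (- (q powr (2 - 2 * \<tau>))) (q^2) * qpoch (q^2) (q^2) k
                       * qpoch (- (q powr (2 + 2 * \<tau>))) (q^2) l))
       \<and> (\<forall>k l.
            D_inner q (vvec q \<tau> \<phi> (- (q ^ (2 * k)))) (vvec q \<tau> \<phi> (q powr (2 * \<tau> + 2 * real l)))
            = of_real (qpoch_inf (q^2) (q^2) * qpoch (- (q powr (2 - 2 * \<tau>))) (q^2) k
                       * qpoch (- (q powr (2 + 2 * \<tau>))) (q^2) l))"
proof -
  have q0: "0 < q" and q1: "q < 1" using assms by auto
  define r where "r = q powr (- (2 * \<tau>))"
  have r0: "0 < r" unfolding r_def using q0 by simp
  have Q0': "0 < q^2" using q0 by simp
  have Q1': "q^2 < 1" using q0 q1 by (simp add: power_less_one_iff)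
  interpret qs "q^2" r by (rule qs.intro[OF Q0' Q1' r0])
  have p2: "q powr 2 = q^2" using q0 by simp
  have e1: "q powr (2 - 2 * \<tau>) = q^2 * r"
  proof -
    have "q powr (2 - 2 * \<tau>) = q powr (2 + (- (2 * \<tau>)))" by simp
    also have "\<dots> = q powr 2 * q powr (- (2 * \<tau>))" by (rule powr_add)
    finally show ?thesis unfolding r_def p2 .
  qed
  have e2: "q powr (2 + 2 * \<tau>) = q^2 / r"
  proof -
    have i: "q powr (2 * \<tau>) = 1 / r" unfolding r_def powr_minus by (metis inverse_eq_divide inverse_inverse_eq)
    have "q powr (2 + 2 * \<tau>) = q powr 2 * q powr (2 * \<tau>)" by (rule powr_add)
    then show ?thesis unfolding i p2 by simp
  qed
  have e3: "q powr (2 * \<tau> + 2) = q^2 / r" using e2 by (simp add: add.commute)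
  have rB: "\<And>k. r * q powr (2 * \<tau> + 2 * real k) = (q^2)^k"
  proof -
    fix k
    have "r * q powr (2 * \<tau> + 2 * real k) = q powr (real (2*k))"
      unfolding r_def using q0 by (simp add: powr_add[symmetric])
    also have "\<dots> = q^(2*k)" by (rule powr_realpow[OF q0])
    also have "\<dots> = (q^2)^k" by (rule power_mult)
    finally show "r * q powr (2 * \<tau> + 2 * real k) = (q^2)^k" .
  qed
  have rA: "\<And>k. r * (- (q ^ (2 * k))) = -r * (q^2)^k" by (simp add: power_mult)
  have B0: "\<And>k. q powr (2 * \<tau> + 2 * real k) \<noteq> 0" using q0 by simp
  have A0: "\<And>k. - (q ^ (2 * k)) \<noteq> 0" using q0 by simp
  have gA: "\<And>k. good (r * (- (q ^ (2 * k))))" unfolding rA by (rule good_A)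
  have gB: "\<And>k. good (r * q powr (2 * \<tau> + 2 * real k))" unfolding rB by (rule good_B)
  have DS: "\<And>a b. a \<noteq> 0 \<Longrightarrow> b \<noteq> 0 \<Longrightarrow> good (r*a) \<Longrightarrow> good (r*b) \<Longrightarrow>
      D_inner q (vvec q \<tau> \<phi> a) (vvec q \<tau> \<phi> b) = of_real (S (r*a) (r*b))"
    by (rule D_inner_S[OF refl r_def q0])
  have inf1: "qpoch_inf (- (q powr (2 * \<tau> + 2))) (q^2) = fe (q^2/r)"
    unfolding qpoch_inf_def e3 euler[symmetric] by simp
  have inf2: "qpoch_inf (- (q powr (2 - 2 * \<tau>))) (q^2) = fe (q^2*r)"
    unfolding qpoch_inf_def e1 euler[symmetric] by simp
  have inf3: "qpoch_inf (q^2) (q^2) = fe (-(q^2))"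
    unfolding qpoch_inf_def euler[symmetric] by simp
  show ?thesis
  proof (intro conjI allI impI)
    fix k l :: nat assume "l \<le> k"
    show "D_inner q (vvec q \<tau> \<phi> (- (q ^ (2 * k)))) (vvec q \<tau> \<phi> (- (q ^ (2 * l))))
            = of_real (qpoch_inf (- (q powr (2 * \<tau> + 2))) (q^2) * qpoch (q^2) (q^2) k
                       * qpoch (- (q powr (2 - 2 * \<tau>))) (q^2) l)"
      unfolding DS[OF A0 A0 gA gA] rA S_AA[OF \<open>l \<le> k\<close>] inf1 e1 ..
  next
    fix k l :: nat assume "l \<le> k"
    show "D_inner q (vvec q \<tau> \<phi> (q powr (2 * \<tau> + 2 * real k))) (vvec q \<tau> \<phi> (q powr (2 * \<tau> + 2 * real l)))
            = of_real (qpoch_inf (- (q powr (2 - 2 * \<tau>))) (q^2) * qpoch (q^2) (q^2) k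
                       * qpoch (- (q powr (2 + 2 * \<tau>))) (q^2) l)"
      unfolding DS[OF B0 B0 gB gB] rB S_BB[OF \<open>l \<le> k\<close>] inf2 e2 ..
  next
    fix k l :: nat
    show "D_inner q (vvec q \<tau> \<phi> (- (q ^ (2 * k)))) (vvec q \<tau> \<phi> (q powr (2 * \<tau> + 2 * real l)))
            = of_real (qpoch_inf (q^2) (q^2) * qpoch (- (q powr (2 - 2 * \<tau>))) (q^2) k
                       * qpoch (- (q powr (2 + 2 * \<tau>))) (q^2) l)"
      unfolding DS[OF A0 B0 gA gB] rA rB S_AB inf3 e1 e2 ..
  qed
qed


end
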